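(* For every $N>1$ there exist connected graphs $H\subsetneq G$ ($H$ a proper subgraph of $G$) with $\chi(H)=\chi(G)$ satisfying $N\,\mathrm{sn}(H)<\mathrm{sn}(G)$. The same holds with $\underline{\mathrm{lcs}}$ in place of $\mathrm{sn}$: for every $N>1$ there exist such $H\subsetneq G$ with $N\,\underline{\mathrm{lcs}}(H)<\underline{\mathrm{lcs}}(G)$.
   Context: All graphs are finite and simple. For a graph $G=(V,E)$ with $k=\chi(G)$, a proper $k$-colouring is a map $c:V\to[k]$ with $c(u)\neq c(v)$ for every edge $uv$. A set $S\subseteq V$ is a determining set for $(G,c)$ if there is no proper $k$-colouring $c'\neq c$ with $c'(s)=c(s)$ for all $s\in S$; a critical set is an inclusion-minimal determining set. $\mathrm{scs}(G,c)$ and $\mathrm{lcs}(G,c)$ are the sizes of a smallest resp. largest critical set for $(G,c)$. $\mathrm{sn}(G)=\min_c\mathrm{scs}(G,c)$ and $\underline{\mathrm{lcs}}(G)=\min_c\mathrm{lcs}(G,c)$, minima over all proper $\chi(G)$-colourings $c$. *)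

theory Defs
  imports Complex_Main "HOL-Library.FuncSet"
begin

type_synonym graph = "nat set \<times> nat set set"

definition verts :: "graph \<Rightarrow> nat set" where "verts G = fst G"
definition edges :: "graph \<Rightarrow> nat set set" where "edges G = snd G"

definition is_graph :: "graph \<Rightarrow> bool" where
  "is_graph G \<longleftrightarrow> finite (verts G) \<and>
     (\<forall>e\<in>edges G. \<exists>u v. e = {u, v} \<and> u \<noteq> v \<and> u \<in> verts G \<and> v \<in> verts G)"

definition connected_graph :: "graph \<Rightarrow> bool" where
  "connected_graph G \<longleftrightarrow> verts G \<noteq> {} \<and>
     (\<forall>u\<in>verts G. \<forall>v\<in>verts G. (u, v) \<in> {(x, y). {x, y} \<in> edges G}\<^sup>*)"

definition subgraph :: "graph \<Rightarrow> graph \<Rightarrow> bool" where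
  "subgraph H G \<longleftrightarrow> verts H \<subseteq> verts G \<and> edges H \<subseteq> edges G"

definition proper_subgraph :: "graph \<Rightarrow> graph \<Rightarrow> bool" where
  "proper_subgraph H G \<longleftrightarrow> subgraph H G \<and> H \<noteq> G"

text \<open>Proper k-colourings c : V \<rightarrow> [k], as extensional functions (undefined off V),
so that two colourings are equal iff they agree on V.\<close>
definition proper_colouring :: "graph \<Rightarrow> nat \<Rightarrow> (nat \<Rightarrow> nat) \<Rightarrow> bool" where
  "proper_colouring G k c \<longleftrightarrow> c \<in> verts G \<rightarrow>\<^sub>E {1..k} \<and>
     (\<forall>u v. {u, v} \<in> edges G \<longrightarrow> c u \<noteq> c v)"

definition chi :: "graph \<Rightarrow> nat" where
  "chi G = (LEAST k. \<exists>c. proper_colouring G k c)"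

definition determining :: "graph \<Rightarrow> (nat \<Rightarrow> nat) \<Rightarrow> nat set \<Rightarrow> bool" where
  "determining G c S \<longleftrightarrow> S \<subseteq> verts G \<and>
     \<not> (\<exists>c'. proper_colouring G (chi G) c' \<and> c' \<noteq> c \<and> (\<forall>s\<in>S. c' s = c s))"

definition critical :: "graph \<Rightarrow> (nat \<Rightarrow> nat) \<Rightarrow> nat set \<Rightarrow> bool" where
  "critical G c S \<longleftrightarrow> determining G c S \<and> (\<forall>T. T \<subset> S \<longrightarrow> \<not> determining G c T)"

definition scs :: "graph \<Rightarrow> (nat \<Rightarrow> nat) \<Rightarrow> nat" where
  "scs G c = Min {card S | S. critical G c S}"

definition lcs :: "graph \<Rightarrow> (nat \<Rightarrow> nat) \<Rightarrow> nat" where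
  "lcs G c = Max {card S | S. critical G c S}"

definition sn :: "graph \<Rightarrow> nat" where
  "sn G = Min {scs G c | c. proper_colouring G (chi G) c}"

definition lcs_min :: "graph \<Rightarrow> nat" where
  "lcs_min G = Min {lcs G c | c. proper_colouring G (chi G) c}"

end

theory Submission
  imports Defs
begin

lemma crit_sub: "critical G c S \<Longrightarrow> S \<subseteq> verts G"
  by (simp add: critical_def determining_def)

lemma fin_cards: "is_graph G \<Longrightarrow> finite {card S | S. critical G c S}"
proof -
  assume "is_graph G"
  hence f: "finite (verts G)" by (simp add: is_graph_def)
  have "{card S | S. critical G c S} \<subseteq> card ` Pow (verts G)"
    using crit_sub by blast
  thus ?thesis using f by (meson finite_Pow_iff finite_imageI finite_subset)
qed

lemma fin_cols: "finite (verts G) \<Longrightarrow> finite {f c | c. proper_colouring G k c}"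
proof -
  assume f: "finite (verts G)"
  have "{f c | c. proper_colouring G k c} \<subseteq> f ` (verts G \<rightarrow>\<^sub>E {1..k})"
    by (auto simp: proper_colouring_def)
  moreover have "finite (f ` (verts G \<rightarrow>\<^sub>E {1..k}))"
    using f by (intro finite_imageI finite_PiE) auto
  ultimately show ?thesis by (rule finite_subset)
qed

lemma det_all: "proper_colouring G (chi G) c \<Longrightarrow> determining G c (verts G)"
  unfolding determining_def proper_colouring_def
proof (intro conjI notI)
  assume c: "c \<in> verts G \<rightarrow>\<^sub>E {1..chi G} \<and> (\<forall>u v. {u, v} \<in> edges G \<longrightarrow> c u \<noteq> c v)"
  assume "\<exists>c'. (c' \<in> verts G \<rightarrow>\<^sub>E {1..chi G} \<and> (\<forall>u v. {u, v} \<in> edges G \<longrightarrow> c' u \<noteq> c' v)) \<and> c' \<noteq> c \<and> (\<forall>s\<in>verts G. c' s = c s)"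
  then obtain c' where "c' \<in> verts G \<rightarrow>\<^sub>E {1..chi G}" "c' \<noteq> c" "\<forall>s\<in>verts G. c' s = c s" by blast
  with c show False using PiE_ext[of c' "verts G" _ c] by blast
qed simp

lemma crit_exists:
  assumes "finite S" "determining G c S"
  shows "\<exists>T\<subseteq>S. critical G c T"
proof -
  let ?P = "\<lambda>m. \<exists>T\<subseteq>S. determining G c T \<and> card T = m"
  have "?P (card S)" using assms by blast
  then obtain m where m: "?P m" "\<And>k. k < m \<Longrightarrow> \<not> ?P k"
    using exists_least_iff[of ?P] by blast
  then obtain T where T: "T \<subseteq> S" "determining G c T" "card T = m" by blast
  have "critical G c T"
    unfolding critical_def
  proof (intro conjI allI impI)
    show "determining G c T" by fact
    fix T' assume "T' \<subset> T"
    moreover have "finite T" using T(1) assms(1) finite_subset by blast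
    ultimately have "card T' < m" using T(3) psubset_card_mono by blast
    thus "\<not> determining G c T'" using m(2) \<open>T' \<subset> T\<close> T(1) by blast
  qed
  thus ?thesis using T(1) by blast
qed

definition wverts :: "nat \<Rightarrow> nat set" where "wverts n = {0..2*n}"
definition wedges :: "nat \<Rightarrow> nat set set" where
  "wedges n = {{0,v} | v. v \<in> {1..2*n}} \<union> {{2*i-1, 2*i} | i. i \<in> {1..n}}"
definition windmill :: "nat \<Rightarrow> graph" where "windmill n = (wverts n, wedges n)"
definition tri :: graph where "tri = ({0,1,2}, {{0,1},{0,2},{1,2}})"

lemma wedge_iff: "{u,v} \<in> wedges n \<longleftrightarrow>
   (u = 0 \<and> v \<in> {1..2*n}) \<or> (v = 0 \<and> u \<in> {1..2*n}) \<or>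
   (\<exists>i\<in>{1..n}. (u = 2*i-1 \<and> v = 2*i) \<or> (u = 2*i \<and> v = 2*i-1))" (is "?L \<longleftrightarrow> ?R")
proof
  assume ?L
  then consider (a) w where "{u,v} = {0,w}" "w \<in> {1..2*n}"
    | (b) i where "{u,v} = {2*i-1,2*i}" "i \<in> {1..n}"
    unfolding wedges_def by blast
  thus ?R
  proof cases
    case a hence "(u = 0 \<and> v = w) \<or> (u = w \<and> v = 0)" unfolding doubleton_eq_iff by blast
    thus ?thesis using a(2) by blast
  next
    case b hence "(u = 2*i-1 \<and> v = 2*i) \<or> (u = 2*i \<and> v = 2*i-1)" unfolding doubleton_eq_iff by blast
    thus ?thesis using b(2) by blast
  qed
next
  assume ?R
  then consider "u = 0 \<and> v \<in> {1..2*n}" | "v = 0 \<and> u \<in> {1..2*n}"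
    | i where "i \<in> {1..n}" "(u = 2*i-1 \<and> v = 2*i) \<or> (u = 2*i \<and> v = 2*i-1)" by blast
  thus ?L
  proof cases
    case 1 thus ?thesis unfolding wedges_def by blast
  next
    case 2 hence "{u,v} = {0,u}" by auto
    thus ?thesis using 2 unfolding wedges_def by blast
  next
    case 3 hence "{u,v} = {2*i-1,2*i}" by auto
    thus ?thesis using 3(1) unfolding wedges_def by blast
  qed
qed


lemma sn_le:
  assumes "is_graph G" "proper_colouring G (chi G) c" "critical G c S"
  shows "sn G \<le> card S"
proof -
  have f: "finite (verts G)" using assms(1) by (simp add: is_graph_def)
  have "sn G \<le> scs G c" unfolding sn_def
    using fin_cols[OF f, of "scs G" "chi G"] assms(2) by (intro Min_le) auto
  also have "scs G c \<le> card S" unfolding scs_def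
    using fin_cards[OF assms(1), of c] assms(3) by (intro Min_le) auto
  finally show ?thesis .
qed

lemma lcs_le:
  assumes "is_graph G" "proper_colouring G (chi G) c"
  shows "lcs_min G \<le> card (verts G)"
proof -
  have f: "finite (verts G)" using assms(1) by (simp add: is_graph_def)
  have "lcs_min G \<le> lcs G c" unfolding lcs_min_def
    using fin_cols[OF f, of "lcs G" "chi G"] assms(2) by (intro Min_le) auto
  also have "lcs G c \<le> card (verts G)" unfolding lcs_def
  proof (subst Max_le_iff)
    show "finite {card S |S. critical G c S}" by (rule fin_cards[OF assms(1)])
    show "{card S |S. critical G c S} \<noteq> {}"
      using crit_exists[OF f det_all[OF assms(2)]] by blast
    show "\<forall>a\<in>{card S |S. critical G c S}. a \<le> card (verts G)"
    proof
      fix a assume "a \<in> {card S |S. critical G c S}"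
      then obtain S where "a = card S" "critical G c S" by blast
      thus "a \<le> card (verts G)" using crit_sub[of G c S] f card_mono by metis
    qed
  qed
  finally show ?thesis .
qed

lemma lower:
  assumes "is_graph G" "proper_colouring G (chi G) c0"
    and H: "\<And>c S. proper_colouring G (chi G) c \<Longrightarrow> determining G c S \<Longrightarrow> m \<le> card S"
  shows "m \<le> sn G \<and> m \<le> lcs_min G"
proof -
  have f: "finite (verts G)" using assms(1) by (simp add: is_graph_def)
  have A: "m \<le> scs G c \<and> m \<le> lcs G c" if c: "proper_colouring G (chi G) c" for c
  proof -
    obtain T where T: "critical G c T"
      using crit_exists[OF f det_all[OF c]] by blast
    have ne: "{card S |S. critical G c S} \<noteq> {}" using T by blast
    have "m \<le> scs G c" unfolding scs_def
      using fin_cards[OF assms(1), of c] ne H[OF c] by (subst Min_ge_iff) (auto simp: critical_def)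
    moreover have "m \<le> lcs G c" unfolding lcs_def
      using fin_cards[OF assms(1), of c] ne H[OF c] T by (subst Max_ge_iff) (auto simp: critical_def)
    ultimately show ?thesis by blast
  qed
  have ne2: "{f c |c. proper_colouring G (chi G) c} \<noteq> {}" for f :: "(nat \<Rightarrow> nat) \<Rightarrow> nat"
    using assms(2) by blast
  have "m \<le> sn G" unfolding sn_def
    using fin_cols[OF f, of "scs G" "chi G"] ne2[of "scs G"] A by (subst Min_ge_iff) auto
  moreover have "m \<le> lcs_min G" unfolding lcs_min_def
    using fin_cols[OF f, of "lcs G" "chi G"] ne2[of "lcs G"] A by (subst Min_ge_iff) auto
  ultimately show ?thesis by blast
qed

lemma chi3:
  assumes "{0,1} \<in> edges G" "{0,2} \<in> edges G" "{1,2} \<in> edges G"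
    "0 \<in> verts G" "1 \<in> verts G" "2 \<in> verts G" "proper_colouring G 3 c"
  shows "chi G = 3"
  unfolding chi_def
proof (rule Least_equality)
  show "\<exists>c. proper_colouring G 3 c" using assms(7) by blast
  fix k assume "\<exists>c. proper_colouring G k c"
  then obtain d where d: "proper_colouring G k d" by blast
  hence "d 0 \<in> {1..k}" "d 1 \<in> {1..k}" "d 2 \<in> {1..k}" "d 0 \<noteq> d 1" "d 0 \<noteq> d 2" "d 1 \<noteq> d 2"
    using assms unfolding proper_colouring_def by (auto simp: PiE_iff)
  thus "3 \<le> k" by auto
qed

lemma conn0:
  assumes "0 \<in> verts G" "\<And>v. v \<in> verts G \<Longrightarrow> v \<noteq> 0 \<Longrightarrow> {0,v} \<in> edges G"
  shows "connected_graph G"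
  unfolding connected_graph_def
proof (intro conjI ballI)
  show "verts G \<noteq> {}" using assms by blast
  let ?R = "{(x, y). {x, y} \<in> edges G}"
  have a: "(0, v) \<in> ?R\<^sup>*" if "v \<in> verts G" for v
    using assms(2)[OF that] by (cases "v = 0") auto
  have b: "(v, 0) \<in> ?R\<^sup>*" if "v \<in> verts G" for v
    using assms(2)[OF that] by (cases "v = 0") (auto simp: insert_commute)
  fix u v assume "u \<in> verts G" "v \<in> verts G"
  thus "(u, v) \<in> ?R\<^sup>*" using a b by (meson rtrancl_trans)
qed


definition cw :: "nat \<Rightarrow> nat \<Rightarrow> nat" where
  "cw n = restrict (\<lambda>v. if v = 0 then 1 else if odd v then 2 else 3) (wverts n)"

lemma wm_graph: "is_graph (windmill n)"
  unfolding is_graph_def windmill_def verts_def edges_def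
proof (intro conjI ballI)
  show "finite (fst (wverts n, wedges n))" by (simp add: wverts_def)
  fix e assume "e \<in> snd (wverts n, wedges n)"
  then consider (a) w where "e = {0,w}" "w \<in> {1..2*n}"
    | (b) i where "e = {2*i-1,2*i}" "i \<in> {1..n}"
    unfolding wedges_def by auto
  thus "\<exists>u v. e = {u, v} \<and> u \<noteq> v \<and> u \<in> fst (wverts n, wedges n) \<and> v \<in> fst (wverts n, wedges n)"
  proof cases
    case a thus ?thesis by (auto simp: wverts_def)
  next
    case b
    hence "2*i-1 \<noteq> 2*i" "2*i-1 \<in> wverts n" "2*i \<in> wverts n" by (auto simp: wverts_def)
    thus ?thesis using b(1) by auto
  qed
qed

lemma wm_conn: "connected_graph (windmill n)"
  by (rule conn0) (auto simp: windmill_def verts_def edges_def wverts_def wedges_def)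

lemma wm_proper: "proper_colouring (windmill n) 3 (cw n)"
  unfolding proper_colouring_def
proof (intro conjI allI impI)
  show "cw n \<in> verts (windmill n) \<rightarrow>\<^sub>E {1..3}"
    by (auto simp: cw_def windmill_def verts_def)
  fix u v assume "{u, v} \<in> edges (windmill n)"
  hence "{u,v} \<in> wedges n" by (simp add: windmill_def edges_def)
  hence "(u = 0 \<and> v \<in> {1..2*n}) \<or> (v = 0 \<and> u \<in> {1..2*n}) \<or>
   (\<exists>i\<in>{1..n}. (u = 2*i-1 \<and> v = 2*i) \<or> (u = 2*i \<and> v = 2*i-1))" by (simp only: wedge_iff)
  thus "cw n u \<noteq> cw n v"
    by (auto simp: cw_def wverts_def)
qed

lemma wm_chi: "n \<ge> 1 \<Longrightarrow> chi (windmill n) = 3"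
  by (rule chi3[OF _ _ _ _ _ _ wm_proper])
     (auto simp: windmill_def verts_def edges_def wverts_def wedge_iff intro!: bexI[of _ 1])

lemma nbr:
  assumes "{x,v} \<in> wedges n" "i \<in> {1..n}" "x \<in> {2*i-1, 2*i}" "v \<notin> {2*i-1, 2*i}"
  shows "v = 0"
proof -
  have "(x = 0 \<and> v \<in> {1..2*n}) \<or> (v = 0 \<and> x \<in> {1..2*n}) \<or>
   (\<exists>j\<in>{1..n}. (x = 2*j-1 \<and> v = 2*j) \<or> (x = 2*j \<and> v = 2*j-1))"
    using assms(1) by (simp only: wedge_iff)
  thus ?thesis using assms(2-4) by auto presburger+
qed

lemma wm_meet:
  assumes n: "n \<ge> 1" and c: "proper_colouring (windmill n) (chi (windmill n)) c"
    and S: "determining (windmill n) c S" and i: "i \<in> {1..n}"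
  shows "2*i-1 \<in> S \<or> 2*i \<in> S"
proof (rule ccontr)
  assume nS: "\<not> (2*i-1 \<in> S \<or> 2*i \<in> S)"
  define a where "a = 2*i-1"
  define b where "b = 2*i"
  have ab: "a \<noteq> b" "a \<noteq> 0" "b \<noteq> 0" "a \<in> wverts n" "b \<in> wverts n"
    using i by (auto simp: a_def b_def wverts_def)
  have ch: "chi (windmill n) = 3" using wm_chi n by simp
  have cP: "c \<in> wverts n \<rightarrow>\<^sub>E {1..3}" and cE: "\<And>u v. {u,v} \<in> wedges n \<Longrightarrow> c u \<noteq> c v"
    using c ch by (auto simp: proper_colouring_def windmill_def verts_def edges_def)
  have e0a: "{0,a} \<in> wedges n" "{0,b} \<in> wedges n" "{a,b} \<in> wedges n"
    using i by (auto simp: wedge_iff a_def b_def)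
  define c' where "c' = c(a := c b, b := c a)"
  have "proper_colouring (windmill n) 3 c'"
    unfolding proper_colouring_def
  proof (intro conjI allI impI)
    show "c' \<in> verts (windmill n) \<rightarrow>\<^sub>E {1..3}"
      using cP ab by (auto simp: c'_def windmill_def verts_def PiE_iff extensional_def)
    have one: "c' u \<noteq> c' v" if e: "{u,v} \<in> wedges n" and u: "u \<in> {a,b}" for u v
    proof (cases "v \<in> {a,b}")
      case True
      hence "u \<noteq> v" using e by (auto simp: wedge_iff)
      thus ?thesis using True u ab cE[OF e0a(3)] by (auto simp: c'_def)
    next
      case False
      hence "v = 0" using nbr[OF e i] u unfolding a_def b_def by blast
      thus ?thesis using False u ab cE[OF e0a(1)] cE[OF e0a(2)] by (auto simp: c'_def)
    qed
    fix u v assume "{u, v} \<in> edges (windmill n)"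
    hence e: "{u,v} \<in> wedges n" by (simp add: windmill_def edges_def)
    hence e': "{v,u} \<in> wedges n" by (simp add: insert_commute)
    show "c' u \<noteq> c' v"
    proof (cases "u \<in> {a,b}")
      case True thus ?thesis using one[OF e] by blast
    next
      case False note F = this
      show ?thesis
      proof (cases "v \<in> {a,b}")
        case True thus ?thesis using one[OF e'] by metis
      next
        case False thus ?thesis using F cE[OF e] by (auto simp: c'_def)
      qed
    qed
  qed
  moreover have "c' \<noteq> c"
  proof
    assume "c' = c"
    hence "c' a = c a" by simp
    thus False using cE[OF e0a(3)] ab by (simp add: c'_def)
  qed
  moreover have "\<forall>s\<in>S. c' s = c s" using nS by (auto simp: c'_def a_def b_def)
  moreover have "\<not>(\<exists>c'. proper_colouring (windmill n) 3 c' \<and> c' \<noteq> c \<and> (\<forall>s\<in>S. c' s = c s))"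
    using S ch by (simp add: determining_def)
  ultimately show False by blast
qed

lemma wm_card:
  assumes n: "n \<ge> 1" and c: "proper_colouring (windmill n) (chi (windmill n)) c"
    and S: "determining (windmill n) c S"
  shows "n \<le> card S"
proof -
  have fS: "finite S" using S by (auto simp: determining_def windmill_def verts_def wverts_def
      intro: finite_subset)
  have "{1..n} \<subseteq> (\<lambda>x. (x+1) div 2) ` S"
  proof
    fix i assume i: "i \<in> {1..n}"
    from wm_meet[OF n c S i] show "i \<in> (\<lambda>x. (x+1) div 2) ` S"
    proof
      assume "2*i-1 \<in> S"
      moreover have "((2*i-1)+1) div 2 = i" using i by auto
      ultimately show ?thesis by (metis image_eqI)
    next
      assume "2*i \<in> S"
      moreover have "((2*i)+1) div 2 = i" by auto
      ultimately show ?thesis by (metis image_eqI)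
    qed
  qed
  hence "card {1..n} \<le> card ((\<lambda>x. (x+1) div 2) ` S)" using fS by (intro card_mono) auto
  also have "\<dots> \<le> card S" using fS by (rule card_image_le)
  finally show ?thesis by simp
qed

definition ct :: "nat \<Rightarrow> nat" where "ct = restrict (\<lambda>v. v + 1) {0,1,2}"

lemma tri_graph: "is_graph tri"
proof -
  have e1: "\<exists>u v. {0,1::nat} = {u,v} \<and> u \<noteq> v \<and> u \<in> verts tri \<and> v \<in> verts tri"
    by (rule exI[of _ 0], rule exI[of _ 1]) (simp add: tri_def verts_def)
  have e2: "\<exists>u v. {0,2::nat} = {u,v} \<and> u \<noteq> v \<and> u \<in> verts tri \<and> v \<in> verts tri"
    by (rule exI[of _ 0], rule exI[of _ 2]) (simp add: tri_def verts_def)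
  have e3: "\<exists>u v. {1,2::nat} = {u,v} \<and> u \<noteq> v \<and> u \<in> verts tri \<and> v \<in> verts tri"
    by (rule exI[of _ 1], rule exI[of _ 2]) (simp add: tri_def verts_def)
  show ?thesis unfolding is_graph_def
  proof (intro conjI ballI)
    show "finite (verts tri)" by (simp add: tri_def verts_def)
    fix e assume "e \<in> edges tri"
    hence "e = {0,1} \<or> e = {0,2} \<or> e = {1,2}" by (simp add: tri_def edges_def)
    thus "\<exists>u v. e = {u, v} \<and> u \<noteq> v \<and> u \<in> verts tri \<and> v \<in> verts tri"
      using e1 e2 e3 by metis
  qed
qed

lemma tri_conn: "connected_graph tri"
proof (rule conn0)
  show "0 \<in> verts tri" by (simp add: tri_def verts_def)
  fix v assume "v \<in> verts tri" "v \<noteq> 0"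
  hence "v = 1 \<or> v = 2" by (simp add: tri_def verts_def)
  thus "{0,v} \<in> edges tri" by (elim disjE) (simp_all add: tri_def edges_def)
qed

lemma tri_proper: "proper_colouring tri 3 ct"
  by (auto simp: proper_colouring_def tri_def verts_def edges_def ct_def doubleton_eq_iff)

lemma tri_chi: "chi tri = 3"
  by (rule chi3[OF _ _ _ _ _ _ tri_proper]) (auto simp: tri_def verts_def edges_def)

lemma tri_sn: "sn tri \<le> 2"
proof -
  have "determining tri ct {0,1}"
    unfolding determining_def tri_chi
  proof (intro conjI notI)
    show "{0,1} \<subseteq> verts tri" by (simp add: tri_def verts_def)
    assume "\<exists>c'. proper_colouring tri 3 c' \<and> c' \<noteq> ct \<and> (\<forall>s\<in>{0,1}. c' s = ct s)"
    then obtain d where d: "proper_colouring tri 3 d" "d \<noteq> ct" "d 0 = 1" "d 1 = 2"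
      by (auto simp: ct_def)
    have dP: "d \<in> {0,1,2} \<rightarrow>\<^sub>E {1..3}"
      using d(1) unfolding proper_colouring_def tri_def verts_def by simp
    have dE: "\<forall>u v. {u, v} \<in> edges tri \<longrightarrow> d u \<noteq> d v"
      using d(1) unfolding proper_colouring_def by blast
    have e02: "{0,2} \<in> edges tri" "{1,2} \<in> edges tri" by (simp_all add: tri_def edges_def)
    have "d 0 \<noteq> d 2" using dE e02(1) by blast
    moreover have "d 1 \<noteq> d 2" using dE e02(2) by blast
    moreover have "d 2 \<in> {1..3}" using dP by (simp add: PiE_iff)
    ultimately have "d 2 = 3" using d(3,4) by auto
    hence "d = ct" using dP d(3,4) by (intro PiE_ext[OF dP]) (auto simp: ct_def)
    thus False using d(2) by simp
  qed
  then obtain T where T: "T \<subseteq> {0,1}" "critical tri ct T"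
    using crit_exists[of "{0,1}" tri ct] by auto
  have "sn tri \<le> card T" using sn_le[OF tri_graph _ T(2)] tri_proper tri_chi by simp
  also have "\<dots> \<le> card {0::nat,1}" using T(1) by (intro card_mono) auto
  finally show ?thesis by simp
qed

lemma tri_lcs: "lcs_min tri \<le> 3"
proof -
  have "proper_colouring tri (chi tri) ct" unfolding tri_chi by (rule tri_proper)
  hence "lcs_min tri \<le> card (verts tri)" by (rule lcs_le[OF tri_graph])
  moreover have "card (verts tri) = 3" by (simp add: tri_def verts_def)
  ultimately show ?thesis by simp
qed

lemma sub: assumes n: "n \<ge> 2" shows "proper_subgraph tri (windmill n)"
proof -
  have v: "verts tri = {0,1,2}" "edges tri = {{0,1},{0,2},{1,2}}"
    "verts (windmill n) = {0..2*n}" "edges (windmill n) = wedges n"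
    by (simp_all add: tri_def windmill_def verts_def edges_def wverts_def)
  have e: "{0,1} \<in> wedges n" "{0,2} \<in> wedges n" "{1,2} \<in> wedges n"
    using n by (simp_all only: wedge_iff) (auto intro!: bexI[of _ 1])
  have "3 \<in> verts (windmill n)" "3 \<notin> verts tri" using n v by auto
  hence "tri \<noteq> windmill n" by metis
  thus ?thesis unfolding proper_subgraph_def subgraph_def v using e n by auto
qed

lemma main:
  assumes N: "N > (1::real)"
  shows "\<exists>G H. is_graph G \<and> is_graph H \<and> connected_graph G \<and> connected_graph H \<and>
                   proper_subgraph H G \<and> chi H = chi G \<and> N * real (sn H) < real (sn G)
                   \<and> N * real (lcs_min H) < real (lcs_min G)"
proof -
  define n where "n = nat \<lceil>3*N\<rceil> + 1"
  have n3: "real n > 3*N" unfolding n_def by linarith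
  have n2: "n \<ge> 2" using n3 N by linarith
  have L: "n \<le> sn (windmill n) \<and> n \<le> lcs_min (windmill n)"
    using wm_card[of n] n2 wm_proper wm_chi[of n]
    by (intro lower[OF wm_graph, of _ "cw n"]) auto
  have "N * real (sn tri) \<le> N * 2" using tri_sn N by simp
  hence A: "N * real (sn tri) < real (sn (windmill n))" using L n3 N by linarith
  have "N * real (lcs_min tri) \<le> N * 3" using tri_lcs N by simp
  hence B: "N * real (lcs_min tri) < real (lcs_min (windmill n))" using L n3 N by linarith
  have C: "chi tri = chi (windmill n)" using tri_chi wm_chi[of n] n2 by simp
  show ?thesis
    apply (rule exI[of _ "windmill n"], rule exI[of _ tri])
    using A B wm_graph tri_graph wm_conn tri_conn sub[OF n2] C by blast
qed

theorem proposition6: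
  shows "(\<forall>N::real. N > 1 \<longrightarrow>
            (\<exists>G H. is_graph G \<and> is_graph H \<and> connected_graph G \<and> connected_graph H \<and>
                   proper_subgraph H G \<and> chi H = chi G \<and> N * real (sn H) < real (sn G))) \<and>
         (\<forall>N::real. N > 1 \<longrightarrow>
            (\<exists>G H. is_graph G \<and> is_graph H \<and> connected_graph G \<and> connected_graph H \<and>
                   proper_subgraph H G \<and> chi H = chi G \<and> N * real (lcs_min H) < real (lcs_min G)))"
  using main by blast

end
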